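(* Assume the MDP satisfies the low-rank assumption with parameter $d$. For any two policies $\pi^\theta,\pi^\beta$ and all $t\ge2$ (with $t\le H$), \[ \big\|(\mu_t^{\pi^\theta}\mathbf 1^\top)\circ\pi^\theta_t-(\mu_t^{\pi^\beta}\mathbf 1^\top)\circ\pi^\theta_t\big\|_{\mathrm{op}}\le\sqrt{dS^2A}\,\big\|d_{t-1}^{\pi^\beta}-d_{t-1}^{\pi^\theta}\big\|_{\mathrm{op}}. \]
   Context: MDP: finite state space $\mathcal S$ ($S=|\mathcal S|$), finite action space $\mathcal A$ ($A=|\mathcal A|$), horizon $H$, transitions $P_t(\cdot\mid s,a)$, initial distribution $\mu_1$. For a policy $\pi=\{\pi_t\}$: $s_1\sim\mu_1$, $a_t\sim\pi_t(\cdot\mid s_t)$, $s_{t+1}\sim P_t(\cdot\mid s_t,a_t)$; $\mu_t^\pi(s)=\Pr_\pi(s_t=s)$ (a vector in $\mathbb R^S$), $d_t^\pi(s,a)=\Pr_\pi(s_t=s,a_t=a)$ and $\pi_t$ (entries $\pi_t(a\mid s)$) are viewed as $S\times A$ matrices; $\mathbf 1\in\mathbb R^A$ is the all-ones vector; $\circ$ is the entrywise product; $\|\cdot\|_{\mathrm{op}}$ the spectral norm. Low-rank assumption with parameter $d$: with $d'=\lfloor d/2\rfloor$, for each $t$ either $P_t(s'\mid s,a)=\sum_{i=1}^{d'}u_{t,i}(s',s)w_{t,i}(a)$ for all $s',s,a$, or $P_t(s'\mid s,a)=\sum_{i=1}^{d'}u_{t,i}(s)w_{t,i}(s',a)$ for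 all $s',s,a$ (and each reward has rank at most $d'$). *)

theory Defs
  imports "HOL-Analysis.Analysis"
begin

text \<open>Transitions: P t s a s' = P_t(s' | s, a).  Policy: pol t s a = pi_t(a | s).
  Initial distribution m1 = mu_1.  Time indices start at 1.\<close>

primrec state_marg ::
  "('s::finite \<Rightarrow> real) \<Rightarrow> (nat \<Rightarrow> 's \<Rightarrow> 'a::finite \<Rightarrow> 's \<Rightarrow> real)
   \<Rightarrow> (nat \<Rightarrow> 's \<Rightarrow> 'a \<Rightarrow> real) \<Rightarrow> nat \<Rightarrow> 's \<Rightarrow> real" where
  "state_marg m1 P pol 0 = m1"
| "state_marg m1 P pol (Suc t) =
     (if t = 0 then m1
      else (\<lambda>s'. \<Sum>s\<in>UNIV. \<Sum>a\<in>UNIV. state_marg m1 P pol t s * pol t s a * P t s a s'))"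

text \<open>Occupancy measure d_t^pol(s,a) = Pr_pi(s_t = s, a_t = a), as an S x A matrix.\<close>
definition occ_mat ::
  "('s::finite \<Rightarrow> real) \<Rightarrow> (nat \<Rightarrow> 's \<Rightarrow> 'a::finite \<Rightarrow> 's \<Rightarrow> real)
   \<Rightarrow> (nat \<Rightarrow> 's \<Rightarrow> 'a \<Rightarrow> real) \<Rightarrow> nat \<Rightarrow> real^'a^'s" where
  "occ_mat m1 P pol t = (\<chi> s a. state_marg m1 P pol t s * pol t s a)"

definition op_norm :: "real^'n::finite^'m::finite \<Rightarrow> real" where
  "op_norm M = onorm (\<lambda>x. M *v x)"

definition low_rank_kernel :: "nat \<Rightarrow> ('s \<Rightarrow> 'a \<Rightarrow> 's \<Rightarrow> real) \<Rightarrow> bool" where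
  "low_rank_kernel d Pt \<longleftrightarrow>
     (\<exists>u :: nat \<Rightarrow> 's \<Rightarrow> 's \<Rightarrow> real. \<exists>w :: nat \<Rightarrow> 'a \<Rightarrow> real.
        \<forall>s' s a. Pt s a s' = (\<Sum>i<d div 2. u i s' s * w i a))
   \<or> (\<exists>u :: nat \<Rightarrow> 's \<Rightarrow> real. \<exists>w :: nat \<Rightarrow> 's \<Rightarrow> 'a \<Rightarrow> real.
        \<forall>s' s a. Pt s a s' = (\<Sum>i<d div 2. u i s * w i s' a))"

end

theory Submission
  imports Defs
begin

lemma norm_sq_vec: "(norm (x::real^'n))^2 = (\<Sum>i\<in>UNIV. (x$i)^2)"
  unfolding power2_norm_eq_inner inner_vec_def by (simp add: power2_eq_square)

lemma row_bound:
  fixes D :: "real^'a::finite^'s::finite"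
  shows "(\<Sum>a\<in>UNIV. (D$s$a)^2) \<le> (op_norm D)^2"
proof -
  let ?r = "D$s"
  have N0: "0 \<le> op_norm D" unfolding op_norm_def by (rule onorm_pos_le) simp
  have "(norm ?r)^2 = (D *v ?r)$s"
    unfolding norm_sq_vec by (simp add: matrix_vector_mult_def power2_eq_square)
  also have "\<dots> \<le> norm (D *v ?r)" using component_le_norm_cart[of "D *v ?r" s] by linarith
  also have "\<dots> \<le> op_norm D * norm ?r" unfolding op_norm_def by (rule onorm) simp
  finally have h: "(norm ?r)^2 \<le> op_norm D * norm ?r" .
  have "norm ?r \<le> op_norm D"
  proof (cases "norm ?r = 0")
    case True then show ?thesis using N0 by simp
  next
    case False
    then have "norm ?r > 0" by simp
    with h show ?thesis by (simp add: power2_eq_square)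
  qed
  then have "(norm ?r)^2 \<le> (op_norm D)^2" by (simp add: power_mono)
  then show ?thesis by (simp add: norm_sq_vec)
qed

lemma frob_bound:
  fixes D :: "real^'a::finite^'s::finite"
  shows "(\<Sum>s\<in>UNIV. \<Sum>a\<in>UNIV. (D$s$a)^2) \<le> real CARD('s) * (op_norm D)^2"
proof -
  have "(\<Sum>s\<in>UNIV. \<Sum>a\<in>UNIV. (D$s$a)^2) \<le> (\<Sum>s\<in>(UNIV::'s set). (op_norm D)^2)"
    by (rule sum_mono) (rule row_bound)
  then show ?thesis by simp
qed

lemma cs_double:
  fixes f g :: "'s::finite \<Rightarrow> 'a::finite \<Rightarrow> real"
  shows "(\<Sum>s\<in>UNIV. \<Sum>a\<in>UNIV. f s a * g s a)^2
     \<le> (\<Sum>s\<in>UNIV. \<Sum>a\<in>UNIV. (f s a)^2) * (\<Sum>s\<in>UNIV. \<Sum>a\<in>UNIV. (g s a)^2)"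
proof -
  have e: "\<And>h::'s \<Rightarrow> 'a \<Rightarrow> real. (\<Sum>s\<in>UNIV. \<Sum>a\<in>UNIV. h s a) = (\<Sum>p\<in>UNIV. h (fst p) (snd p))"
  proof -
    fix h :: "'s \<Rightarrow> 'a \<Rightarrow> real"
    have "(\<Sum>s\<in>UNIV. \<Sum>a\<in>UNIV. h s a) = (\<Sum>p\<in>UNIV \<times> UNIV. h (fst p) (snd p))"
      unfolding sum.cartesian_product by (simp add: case_prod_beta')
    then show "(\<Sum>s\<in>UNIV. \<Sum>a\<in>UNIV. h s a) = (\<Sum>p\<in>UNIV. h (fst p) (snd p))"
      by (simp only: UNIV_Times_UNIV)
  qed
  show ?thesis unfolding e by (rule Cauchy_Schwarz_ineq_sum)
qed

theorem lemma7:
  fixes H d t :: nat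
    and m1 :: "'s::finite \<Rightarrow> real"
    and P :: "nat \<Rightarrow> 's \<Rightarrow> 'a::finite \<Rightarrow> 's \<Rightarrow> real"
    and \<theta> \<beta> :: "nat \<Rightarrow> 's \<Rightarrow> 'a \<Rightarrow> real"
  assumes init_nonneg: "\<forall>s. m1 s \<ge> 0"
    and init_sum: "(\<Sum>s\<in>UNIV. m1 s) = 1"
    and P_nonneg: "\<forall>k\<in>{1..<H}. \<forall>s a s'. P k s a s' \<ge> 0"
    and P_sum: "\<forall>k\<in>{1..<H}. \<forall>s a. (\<Sum>s'\<in>UNIV. P k s a s') = 1"
    and \<theta>_nonneg: "\<forall>k\<in>{1..H}. \<forall>s a. \<theta> k s a \<ge> 0"
    and \<theta>_sum: "\<forall>k\<in>{1..H}. \<forall>s. (\<Sum>a\<in>UNIV. \<theta> k s a) = 1"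
    and \<beta>_nonneg: "\<forall>k\<in>{1..H}. \<forall>s a. \<beta> k s a \<ge> 0"
    and \<beta>_sum: "\<forall>k\<in>{1..H}. \<forall>s. (\<Sum>a\<in>UNIV. \<beta> k s a) = 1"
    and low_rank: "\<forall>k\<in>{1..<H}. low_rank_kernel d (P k)"
    and t_ge: "2 \<le> t" and t_le: "t \<le> H"
  shows "op_norm ((\<chi> s a. state_marg m1 P \<theta> t s * \<theta> t s a
                          - state_marg m1 P \<beta> t s * \<theta> t s a) :: real^'a^'s)
         \<le> sqrt (real d * real (CARD('s))^2 * real CARD('a))
           * op_norm (occ_mat m1 P \<beta> (t - 1) - occ_mat m1 P \<theta> (t - 1))"
proof -
  define k where "k = t - 1"
  have kH: "k \<in> {1..<H}" unfolding k_def atLeastLessThan_iff using t_ge t_le by linarith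
  have tH: "t \<in> {1..H}" using t_ge t_le by simp
  have tk: "t = Suc k" "k \<noteq> 0" using t_ge by (auto simp: k_def)
  define D where "D = occ_mat m1 P \<beta> k - occ_mat m1 P \<theta> k"
  define N where "N = op_norm D"
  have N0: "0 \<le> N" unfolding N_def op_norm_def by (rule onorm_pos_le) simp
  define \<delta> where "\<delta> s' = state_marg m1 P \<theta> t s' - state_marg m1 P \<beta> t s'" for s'
  have Pnn: "\<And>s a s'. 0 \<le> P k s a s'" using P_nonneg kH by blast
  have Psum: "\<And>s a. (\<Sum>s'\<in>UNIV. P k s a s') = 1" using P_sum kH by blast
  have Ple1: "\<And>s a s'. P k s a s' \<le> 1"
  proof -
    fix s a s'
    have "P k s a s' \<le> (\<Sum>s'\<in>UNIV. P k s a s')"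
      by (rule member_le_sum) (auto intro: Pnn)
    then show "P k s a s' \<le> 1" using Psum by simp
  qed
  have d1: "1 \<le> d"
  proof (rule ccontr)
    assume "\<not> 1 \<le> d"
    then have "d div 2 = 0" by simp
    then have "\<forall>s a s'. P k s a s' = 0"
      using low_rank kH unfolding low_rank_kernel_def by auto
    then show False using Psum by simp
  qed
  have \<delta>_eq: "\<delta> s' = - (\<Sum>s\<in>UNIV. \<Sum>a\<in>UNIV. D$s$a * P k s a s')" for s'
  proof -
    have "\<delta> s' = (\<Sum>s\<in>UNIV. \<Sum>a\<in>UNIV. state_marg m1 P \<theta> k s * \<theta> k s a * P k s a s')
       - (\<Sum>s\<in>UNIV. \<Sum>a\<in>UNIV. state_marg m1 P \<beta> k s * \<beta> k s a * P k s a s')"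
      using tk by (simp add: \<delta>_def)
    also have "\<dots> = - (\<Sum>s\<in>UNIV. \<Sum>a\<in>UNIV. (state_marg m1 P \<beta> k s * \<beta> k s a
        - state_marg m1 P \<theta> k s * \<theta> k s a) * P k s a s')"
      by (simp only: left_diff_distrib sum_subtractf minus_diff_eq)
    finally show ?thesis by (simp add: D_def occ_mat_def)
  qed
  have \<delta>sq: "(\<delta> s')^2 \<le> real CARD('s) * N^2 * (\<Sum>s\<in>UNIV. \<Sum>a\<in>UNIV. (P k s a s')^2)" for s'
  proof -
    have "(\<delta> s')^2 = (\<Sum>s\<in>UNIV. \<Sum>a\<in>UNIV. D$s$a * P k s a s')^2"
      by (simp add: \<delta>_eq)
    also have "\<dots> \<le> (\<Sum>s\<in>UNIV. \<Sum>a\<in>UNIV. (D$s$a)^2) * (\<Sum>s\<in>UNIV. \<Sum>a\<in>UNIV. (P k s a s')^2)"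
      by (rule cs_double)
    also have "\<dots> \<le> real CARD('s) * N^2 * (\<Sum>s\<in>UNIV. \<Sum>a\<in>UNIV. (P k s a s')^2)"
      by (rule mult_right_mono) (auto simp: N_def frob_bound sum_nonneg)
    finally show ?thesis .
  qed
  have Psq: "(\<Sum>s'\<in>UNIV. \<Sum>s\<in>UNIV. \<Sum>a\<in>UNIV. (P k s a s')^2) \<le> real CARD('s) * real CARD('a)"
  proof -
    have "(\<Sum>s'\<in>UNIV. \<Sum>s\<in>UNIV. \<Sum>a\<in>UNIV. (P k s a s')^2)
        \<le> (\<Sum>s'\<in>UNIV. \<Sum>s\<in>UNIV. \<Sum>a\<in>UNIV. P k s a s')"
    proof (intro sum_mono)
      fix s' s a
      have "P k s a s' * P k s a s' \<le> 1 * P k s a s'"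
        by (rule mult_right_mono) (auto intro: Ple1 Pnn)
      then show "(P k s a s')^2 \<le> P k s a s'" by (simp add: power2_eq_square)
    qed
    also have "\<dots> = (\<Sum>s\<in>UNIV. \<Sum>s'\<in>UNIV. \<Sum>a\<in>UNIV. P k s a s')"
      by (rule sum.swap)
    also have "\<dots> = (\<Sum>s\<in>UNIV. \<Sum>a\<in>UNIV. \<Sum>s'\<in>UNIV. P k s a s')"
      by (rule sum.cong[OF refl], rule sum.swap)
    also have "\<dots> = real CARD('s) * real CARD('a)" by (simp add: Psum)
    finally show ?thesis .
  qed
  have \<delta>tot: "(\<Sum>s'\<in>UNIV. (\<delta> s')^2) \<le> (real CARD('s))^2 * real CARD('a) * N^2"
  proof -
    have "(\<Sum>s'\<in>UNIV. (\<delta> s')^2) \<le> (\<Sum>s'\<in>UNIV. real CARD('s) * N^2 * (\<Sum>s\<in>UNIV. \<Sum>a\<in>UNIV. (P k s a s')^2))"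
      by (rule sum_mono) (rule \<delta>sq)
    also have "\<dots> = real CARD('s) * N^2 * (\<Sum>s'\<in>UNIV. \<Sum>s\<in>UNIV. \<Sum>a\<in>UNIV. (P k s a s')^2)"
      by (simp add: sum_distrib_left)
    also have "\<dots> \<le> real CARD('s) * N^2 * (real CARD('s) * real CARD('a))"
      by (rule mult_left_mono[OF Psq]) simp
    finally show ?thesis by (simp add: power2_eq_square algebra_simps)
  qed
  define M :: "real^'a^'s" where "M = (\<chi> s a. state_marg m1 P \<theta> t s * \<theta> t s a
                          - state_marg m1 P \<beta> t s * \<theta> t s a)"
  have thnn: "\<And>s a. 0 \<le> \<theta> t s a" using \<theta>_nonneg tH by blast
  have thsum: "\<And>s. (\<Sum>a\<in>UNIV. \<theta> t s a) = 1" using \<theta>_sum tH by blast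
  have Mbound: "op_norm M \<le> sqrt (\<Sum>s'\<in>UNIV. (\<delta> s')^2)"
    unfolding op_norm_def
  proof (rule onorm_le)
    fix x :: "real^'a"
    have comp: "\<bar>(M *v x)$s\<bar> \<le> \<bar>\<delta> s\<bar> * norm x" for s
    proof -
      have "(M *v x)$s = \<delta> s * (\<Sum>a\<in>UNIV. \<theta> t s a * x$a)"
        by (simp add: M_def \<delta>_def matrix_vector_mult_def sum_distrib_left algebra_simps sum_subtractf)
      moreover have "\<bar>\<Sum>a\<in>UNIV. \<theta> t s a * x$a\<bar> \<le> norm x"
      proof -
        have "\<bar>\<Sum>a\<in>UNIV. \<theta> t s a * x$a\<bar> \<le> (\<Sum>a\<in>UNIV. \<bar>\<theta> t s a * x$a\<bar>)" by (rule sum_abs)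
        also have "\<dots> \<le> (\<Sum>a\<in>UNIV. \<theta> t s a * norm x)"
          by (rule sum_mono) (simp add: abs_mult thnn mult_left_mono component_le_norm_cart)
        also have "\<dots> = norm x" by (simp add: sum_distrib_right[symmetric] thsum)
        finally show ?thesis .
      qed
      ultimately show ?thesis by (simp add: abs_mult mult_left_mono)
    qed
    have "(norm (M *v x))^2 = (\<Sum>s\<in>UNIV. ((M *v x)$s)^2)" by (rule norm_sq_vec)
    also have "\<dots> \<le> (\<Sum>s\<in>UNIV. (\<delta> s)^2 * (norm x)^2)"
    proof (rule sum_mono)
      fix s
      have "((M *v x)$s)^2 = \<bar>(M *v x)$s\<bar>^2" by simp
      also have "\<dots> \<le> (\<bar>\<delta> s\<bar> * norm x)^2" by (rule power_mono[OF comp]) simp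
      finally show "((M *v x)$s)^2 \<le> (\<delta> s)^2 * (norm x)^2" by (simp add: power_mult_distrib)
    qed
    also have "\<dots> = (sqrt (\<Sum>s'\<in>UNIV. (\<delta> s')^2) * norm x)^2"
      by (simp add: power_mult_distrib sum_distrib_right sum_nonneg)
    finally show "norm (M *v x) \<le> sqrt (\<Sum>s'\<in>UNIV. (\<delta> s')^2) * norm x"
      by (rule power2_le_imp_le) (simp add: sum_nonneg)
  qed
  also have "\<dots> \<le> sqrt ((real CARD('s))^2 * real CARD('a) * N^2)"
    using \<delta>tot by simp
  also have "\<dots> = sqrt ((real CARD('s))^2 * real CARD('a)) * N"
    using N0 by (simp add: real_sqrt_mult)
  also have "\<dots> \<le> sqrt (real d * (real CARD('s))^2 * real CARD('a)) * N"
    using d1 N0 by (intro mult_right_mono real_sqrt_le_mono) auto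
  finally show ?thesis by (simp add: M_def N_def D_def k_def)
qed

end
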